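(* Let $m=m_n\ge 1$ and $d=d_n$ be integers with $2\le d\le n$, and let $H^*_{nmd}$ be the random hypergraph on node set $\{1,\dots,n\}$ whose hyperedge set is $\{V_1,\dots,V_m\}$, where $V_1,\dots,V_m$ are mutually independent uniformly random $d$-element subsets of $\{1,\dots,n\}$. Then, as $n\to\infty$, \[ \mathbb{P}(H^*_{nmd} \text{ is connected}) \to \begin{cases} 0 & \text{if } \log n + m\log(1-d/n) \to +\infty,\\ 1 & \text{if } \log n + m\log(1-d/n) \to -\infty.\end{cases} \]
   Context: A hypergraph on node set $V$ is connected if for every partition of $V$ into nonempty sets $V_1',V_2'$ some hyperedge meets both. Convention $\log 0=-\infty$. *)

theory Defs
  imports "HOL-Probability.Probability"
begin

definition hyp_connected :: "'a set \<Rightarrow> 'a set set \<Rightarrow> bool" where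
  "hyp_connected V E \<longleftrightarrow>
     (\<forall>A. A \<subseteq> V \<and> A \<noteq> {} \<and> V - A \<noteq> {} \<longrightarrow>
        (\<exists>e\<in>E. e \<inter> A \<noteq> {} \<and> e \<inter> (V - A) \<noteq> {}))"

definition unif_dsubset :: "nat \<Rightarrow> nat \<Rightarrow> nat set pmf" where
  "unif_dsubset n d = pmf_of_set {S. S \<subseteq> {1..n} \<and> card S = d}"

definition hyp_model :: "nat \<Rightarrow> nat \<Rightarrow> nat \<Rightarrow> (nat \<Rightarrow> nat set) pmf" where
  "hyp_model n m d = Pi_pmf {..<m} {} (\<lambda>_. unif_dsubset n d)"

definition prob_connected :: "nat \<Rightarrow> nat \<Rightarrow> nat \<Rightarrow> real" where
  "prob_connected n m d =
     measure_pmf.prob (hyp_model n m d)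
       {V. hyp_connected {1..n} (V ` {..<m})}"

text \<open>The quantity log n + m log(1 - d/n) as an extended real, with log 0 = -infinity.\<close>
definition threshold_quantity :: "nat \<Rightarrow> nat \<Rightarrow> nat \<Rightarrow> ereal" where
  "threshold_quantity n m d =
     ereal (ln (real n)) +
     (if d = n then - \<infinity> else ereal (real m * ln (1 - real d / real n)))"

end

theory Submission
  imports Defs
begin


lemma bern:
  fixes x c :: real
  assumes "0 \<le> x" "x \<le> 1" "1 \<le> c"
  shows "1 - c*x \<le> (1-x) powr c"
proof (cases "x = 1")
  case True
  then show ?thesis using assms by simp
next
  case False
  define y where "y = (1-x) powr c"
  have y0: "y > 0" using assms False by (simp add: y_def)
  have "y powr (1/c) * 1 powr (1 - 1/c) \<le> (1/c)*y + (1-1/c)*1"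
    using Youngs_inequality_0[of "1/c" "1 - 1/c" y 1] assms y0 by simp
  moreover have "y powr (1/c) = 1 - x"
    using assms False by (simp add: y_def powr_powr)
  ultimately have "1 - x \<le> y/c + (1 - 1/c)" by simp
  then have "c*(1-x) \<le> c*(y/c + (1-1/c))" using assms by (intro mult_left_mono) auto
  then have "c*(1-x) \<le> y + c - 1" using assms by (simp add: algebra_simps)
  then show ?thesis by (simp add: y_def algebra_simps)
qed

lemma fact_bound: "real k ^ k \<le> exp (real k) * fact k"
proof (induction k)
  case 0
  then show ?case by simp
next
  case (Suc k)
  have A: "(real k + 1) ^ k \<le> exp 1 * real k ^ k"
  proof (cases "k = 0")
    case True then show ?thesis by simp
  next
    case False
    then have kp: "real k > 0" by simp
    have "real k + 1 \<le> real k * exp (1 / real k)"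
    proof -
      have "1 + 1/real k \<le> exp (1/real k)" by (rule exp_ge_add_one_self)
      then have "real k * (1 + 1/real k) \<le> real k * exp (1/real k)"
        using kp by (intro mult_left_mono) auto
      then show ?thesis using kp by (simp add: algebra_simps)
    qed
    then have "(real k + 1) ^ k \<le> (real k * exp (1 / real k)) ^ k"
      by (intro power_mono) auto
    also have "\<dots> = real k ^ k * exp (1/real k) ^ k"
      by (simp add: power_mult_distrib)
    also have "exp (1/real k) ^ k = exp 1"
      using exp_of_nat_mult[of k "1/real k", symmetric] kp by simp
    finally show ?thesis by (simp add: mult.commute)
  qed
  have "real (Suc k) ^ Suc k = (real k + 1) ^ k * (real k + 1)" by (simp add: algebra_simps)
  also have "\<dots> \<le> (exp 1 * real k ^ k) * (real k + 1)"
    using A by (intro mult_right_mono) auto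
  also have "\<dots> \<le> (exp 1 * (exp (real k) * fact k)) * (real k + 1)"
    using Suc.IH by (intro mult_right_mono mult_left_mono) auto
  also have "\<dots> = exp (real (Suc k)) * fact (Suc k)"
    by (simp add: exp_add[symmetric] algebra_simps)
  finally show ?case .
qed

lemma ln2_half: "1/2 \<le> ln (2::real)"
proof -
  have "ln (1/2::real) \<le> 1/2 - 1" by (rule ln_le_minus_one) auto
  then show ?thesis by (simp add: ln_div)
qed

lemma ln_ineq:
  fixes k n :: nat
  assumes "1 \<le> k" "2*k \<le> n"
  shows "real k * ln (real n) \<le> real n * ln (2 * real k)"
proof -
  have kp: "real k \<ge> 1" using assms by simp
  have np: "real n \<ge> 2 * real k" using assms by simp
  have "ln (real n) = ln (2*real k) + ln (real n / (2 * real k))"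
    using kp np by (simp add: ln_div)
  also have "\<dots> \<le> ln (2*real k) + (real n / (2*real k) - 1)"
    using kp np by (intro add_left_mono ln_le_minus_one) auto
  finally have "real k * ln (real n) \<le> real k * (ln (2*real k) + (real n / (2*real k) - 1))"
    using kp by (intro mult_left_mono) auto
  also have "\<dots> = real k * ln (2*real k) + real n / 2 - real k"
    using kp by (simp add: field_simps)
  also have "\<dots> \<le> real n * ln (2 * real k)"
  proof -
    have "ln 2 \<le> ln (2 * real k)" using kp by simp
    then have "1/2 \<le> ln (2 * real k)" using ln2_half by linarith
    then have "(real n - real k) * (1/2) \<le> (real n - real k) * ln (2 * real k)"
      using np kp by (intro mult_left_mono) auto
    then have "(real n - real k) / 2 \<le> (real n - real k) * ln (2 * real k)" by simp
    moreover have "(real n - real k) * ln (2 * real k) = real n * ln (2 * real k) - real k * ln (2 * real k)"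
      by (simp add: left_diff_distrib)
    ultimately show ?thesis using np kp by argo
  qed
  finally show ?thesis .
qed



lemma choose_step: "(M choose Suc d) * Suc d = (M choose d) * (M - d)"
proof (cases M)
  case 0 then show ?thesis by simp
next
  case (Suc M')
  have 1: "Suc M' * (M' choose d) = (Suc M' choose Suc d) * Suc d" by (rule Suc_times_binomial_eq)
  have 2: "(Suc M' - d) * (Suc M' choose d) = Suc M' * (Suc M' - 1 choose d)" by (rule binomial_absorb_comp)
  show ?thesis using 1 2 Suc by (simp add: mult.commute)
qed

lemma choose_step_real: "real (M choose Suc d) = real (M choose d) * real (M - d) / real (Suc d)"
proof -
  have "real (M choose Suc d) * real (Suc d) = real (M choose d) * real (M - d)"
    using arg_cong[OF choose_step[of M d], of real] by (simp only: of_nat_mult)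
  then have h: "real (M choose Suc d) * real (Suc d) = real (M choose d) * real (M - d)" .
  have "real (M choose Suc d) = (real (M choose Suc d) * real (Suc d)) / real (Suc d)"
    by (simp del: of_nat_Suc)
  also have "\<dots> = real (M choose d) * real (M - d) / real (Suc d)" by (simp only: h)
  finally show ?thesis .
qed

lemma choose2_real: "real (M choose 2) = real M * (real M - 1) / 2"
proof (cases "M = 0")
  case True then show ?thesis by simp
next
  case False
  have "real (M choose 2) = real (M choose 1) * real (M - 1) / 2"
    using choose_step_real[of M 1] by (simp add: numeral_2_eq_2)
  then show ?thesis using False by (simp add: of_nat_diff)
qed

definition Qf :: "nat \<Rightarrow> nat \<Rightarrow> nat \<Rightarrow> real" where
  "Qf n k d = (real ((n - k) choose d) + real (k choose d)) / real (n choose d)"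

lemma Qf_nonneg: "Qf n k d \<ge> 0" by (simp add: Qf_def)

lemma div3: "(s::real) > 0 \<Longrightarrow> (x/s + y/s)/(z/s) = (x+y)/z"
  by (simp add: add_divide_distrib[symmetric])

lemma Qf_step:
  assumes "d < n" "2*k \<le> n"
  shows "Qf n k (Suc d) \<le> Qf n k d * (real (n - k - d) / real (n - d))"
proof -
  have cpos: "real (n choose d) > 0" using assms by simp
  have npos: "real (n - d) > 0" using assms by simp
  have le: "real (k - d) \<le> real (n - k - d)" using assms by simp
  have "Qf n k (Suc d) = (real ((n-k) choose d) * real (n-k-d) + real (k choose d) * real (k - d))
                        / (real (n choose d) * real (n - d))"
    unfolding Qf_def choose_step_real by (rule div3) simp
  also have "\<dots> \<le> (real ((n-k) choose d) * real (n-k-d) + real (k choose d) * real (n - k - d))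
                        / (real (n choose d) * real (n - d))"
    using cpos npos le by (intro divide_right_mono add_left_mono mult_left_mono) auto
  also have "\<dots> = Qf n k d * (real (n - k - d) / real (n - d))"
    unfolding Qf_def by (simp add: field_simps)
  finally show ?thesis .
qed

lemma Qf_bound:
  assumes k1: "1 \<le> k" and kn: "2*k \<le> n" and d2: "2 \<le> d" and dn: "d \<le> n"
  shows "Qf n k d \<le> (1 - real d / real n) powr (real k * (real n - real k) / (real n - 1))"
proof -
  define c where "c = real k * (real n - real k) / (real n - 1)"
  have N2: "real n \<ge> 2" using kn k1 by simp
  have K1: "real k \<ge> 1" using k1 by simp
  have KN: "2 * real k \<le> real n" using kn by simp
  have c1: "c \<ge> 1"
  proof -
    have "0 \<le> (real k - 1) * (real n - real k - 1)" using K1 KN by (intro mult_nonneg_nonneg) auto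
    then have "real n - 1 \<le> real k * (real n - real k)" by (simp add: algebra_simps)
    then show ?thesis using N2 by (simp add: c_def field_simps)
  qed
  have ck: "c \<le> real k"
  proof -
    have "real k * (real n - real k) \<le> real k * (real n - 1)" using K1 by (intro mult_left_mono) auto
    then show ?thesis using N2 by (simp add: c_def field_simps)
  qed
  have "d \<le> n \<longrightarrow> Qf n k d \<le> (1 - real d / real n) powr c"
    using d2
  proof (induction d rule: nat_induct_at_least)
    case base
    show ?case
    proof
      assume "2 \<le> n"
      have "Qf n k 2 = 1 - c * (2 / real n)"
      proof -
        have e1: "real (n - k) = real n - real k" using kn by (simp add: of_nat_diff)
        have "Qf n k 2 = ((real n - real k) * (real n - real k - 1) / 2 + real k * (real k - 1) / 2)
                          / (real n * (real n - 1) / 2)"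
          unfolding Qf_def choose2_real e1 by simp
        also have "\<dots> = ((real n - real k) * (real n - real k - 1) + real k * (real k - 1)) / (real n * (real n - 1))"
          by (rule div3) simp
        also have "(real n - real k) * (real n - real k - 1) + real k * (real k - 1) = real n * (real n - 1) - 2 * real k * (real n - real k)"
          by (simp add: algebra_simps)
        also have "(real n * (real n - 1) - 2 * real k * (real n - real k)) / (real n * (real n - 1)) = 1 - 2 * real k * (real n - real k) / (real n * (real n - 1))"
          using N2 by (simp add: diff_divide_distrib)
        also have "2 * real k * (real n - real k) / (real n * (real n - 1)) = c * (2 / real n)"
          by (simp add: c_def mult_ac)
        finally show ?thesis .
      qed
      also have "\<dots> \<le> (1 - 2 / real n) powr c"
        using N2 c1 by (intro bern) auto
      finally show "Qf n k 2 \<le> (1 - real 2 / real n) powr c" by simp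
    qed
  next
    case (Suc d)
    show ?case
    proof
      assume dn': "Suc d \<le> n"
      then have dlt: "d < n" by simp
      have IH: "Qf n k d \<le> (1 - real d / real n) powr c" using Suc dlt by simp
      have ND: "real n - real d \<ge> 1" using dn' by simp
      have r: "real (n - k - d) / real (n - d) \<le> (1 - 1 / (real n - real d)) powr c"
      proof (cases "n - k - d = 0")
        case True then show ?thesis by simp
      next
        case False
        then have e: "real (n - k - d) = real n - real k - real d" by (simp add: of_nat_diff)
        have e2: "real (n - d) = real n - real d" using dlt by (simp add: of_nat_diff)
        have "real (n - k - d) / real (n - d) = 1 - real k / (real n - real d)"
          unfolding e e2 using ND by (simp add: field_simps)
        also have "\<dots> \<le> 1 - c * (1 / (real n - real d))"
          using ck ND by (simp add: divide_right_mono)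
        also have "\<dots> \<le> (1 - 1 / (real n - real d)) powr c"
          using ND c1 by (intro bern) auto
        finally show ?thesis .
      qed
      have "Qf n k (Suc d) \<le> Qf n k d * (real (n - k - d) / real (n - d))"
        using Qf_step[OF dlt kn] .
      also have "\<dots> \<le> (1 - real d / real n) powr c * (1 - 1 / (real n - real d)) powr c"
        using IH r Qf_nonneg by (intro mult_mono) auto
      also have "\<dots> = ((1 - real d / real n) * (1 - 1 / (real n - real d))) powr c"
        using ND N2 by (subst powr_mult) (auto simp: field_simps)
      also have "(1 - real d / real n) * (1 - 1 / (real n - real d)) = 1 - real (Suc d) / real n"
        using ND N2 by (simp add: field_simps)
      finally show "Qf n k (Suc d) \<le> (1 - real (Suc d) / real n) powr c" .
    qed
  qed
  then show ?thesis using dn by (simp add: c_def)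
qed



lemma binom_bound:
  assumes k1: "1 \<le> k" and kn: "2*k \<le> n"
  shows "real (n choose k) \<le> (2 * exp 1) ^ k * real n powr (real k * (real n - real k) / real n)"
proof -
  have K1: "real k \<ge> 1" using k1 by simp
  have N: "real n \<ge> 2 * real k" using kn by simp
  have npos: "real n > 0" using N K1 by simp
  have fpos: "fact k > (0::real)" by simp
  have "real (n choose k) * fact k \<le> real n ^ k"
    using binomial_fact_pow[of n k] by (metis of_nat_fact of_nat_le_iff of_nat_mult of_nat_power)
  then have c1: "real (n choose k) \<le> real n ^ k / fact k"
    using fpos by (simp add: field_simps)
  have kk: "1 / fact k \<le> exp (real k) / real k ^ k"
    using fact_bound[of k] fpos K1 by (simp add: field_simps)
  have "real n ^ k = real n powr (real k * (real n - real k) / real n) * real n powr (real k * real k / real n)"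
  proof -
    have "real k * (real n - real k) / real n + real k * real k / real n = real k"
      using npos by (simp add: field_simps)
    then show ?thesis using npos by (simp add: powr_add[symmetric] powr_realpow)
  qed
  moreover have "real n powr (real k * real k / real n) \<le> (2 * real k) ^ k"
  proof -
    have "real k / real n * (real k * ln (real n)) \<le> real k / real n * (real n * ln (2 * real k))"
      using ln_ineq[OF k1 kn] npos K1 by (intro mult_left_mono) auto
    then have "real k * real k / real n * ln (real n) \<le> real k * ln (2 * real k)"
      using npos by (simp add: field_simps)
    then have "exp (real k * real k / real n * ln (real n)) \<le> exp (real k * ln (2 * real k))"
      by simp
    moreover have "exp (real k * ln (2 * real k)) = (2 * real k) ^ k"
      using K1 by (simp add: exp_of_nat_mult)
    ultimately show ?thesis using npos by (simp add: powr_def)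
  qed
  ultimately have "real n ^ k \<le> real n powr (real k * (real n - real k) / real n) * (2 * real k) ^ k"
    by (simp add: mult_left_mono)
  then have "real (n choose k) \<le> real n powr (real k * (real n - real k) / real n) * (2 * real k) ^ k * (1 / fact k)"
    using c1 fpos by (simp add: field_simps)
  also have "\<dots> \<le> real n powr (real k * (real n - real k) / real n) * (2 * real k) ^ k * (exp (real k) / real k ^ k)"
    using kk by (intro mult_left_mono) auto
  also have "\<dots> = real n powr (real k * (real n - real k) / real n) * (2 ^ k * exp (real k))"
    using K1 by (simp add: power_mult_distrib)
  also have "2 ^ k * exp (real k) = (2 * exp 1) ^ k"
  proof -
    have "exp (real k) = exp 1 ^ k" using exp_of_nat_mult[of k 1] by simp
    then show ?thesis by (simp add: power_mult_distrib)
  qed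
  finally show ?thesis by (simp add: mult.commute)
qed

lemma term_bound:
  assumes k1: "1 \<le> k" and kn: "2*k \<le> n" and d2: "2 \<le> d" and dn: "d \<le> n"
    and e0: "0 \<le> n * (1 - real d / real n) ^ m" and e1: "real n * (1 - real d / real n) ^ m \<le> 1"
  shows "real (n choose k) * Qf n k d ^ m \<le> (2 * exp 1 * sqrt (real n * (1 - real d / real n) ^ m)) ^ k"
proof -
  define p where "p = 1 - real d / real n"
  define \<epsilon> where "\<epsilon> = real n * p ^ m"
  define c where "c = real k * (real n - real k) / (real n - 1)"
  define g where "g = real k * (real n - real k) / real n"
  have K1: "real k \<ge> 1" using k1 by simp
  have N: "real n \<ge> 2 * real k" using kn by simp
  have npos: "real n > 0" using N K1 by simp
  have p0: "p \<ge> 0" using dn npos by (simp add: p_def)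
  have E0: "\<epsilon> \<ge> 0" using p0 by (simp add: \<epsilon>_def)
  have E1: "\<epsilon> \<le> 1" using e1 by (simp add: \<epsilon>_def p_def)
  have gc: "g \<le> c"
  proof -
    have "0 \<le> real k * (real n - real k)" using N K1 by simp
    then show ?thesis using N K1 npos unfolding g_def c_def
      by (intro divide_left_mono) auto
  qed
  have kc: "real k / 2 \<le> c"
  proof -
    have "real k / 2 \<le> g" using N K1 npos unfolding g_def by (simp add: field_simps)
    then show ?thesis using gc by simp
  qed
  have g0: "0 \<le> g" using N K1 npos unfolding g_def by simp
  have Q: "Qf n k d \<le> p powr c" using Qf_bound[OF k1 kn d2 dn] by (simp add: p_def c_def)
  have "Qf n k d ^ m \<le> (p powr c) ^ m" using Q Qf_nonneg by (intro power_mono) auto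
  also have "(p powr c) ^ m = (\<epsilon> / real n) powr c"
  proof (cases "p = 0")
    case True
    then show ?thesis using npos by (cases m) (auto simp: \<epsilon>_def)
  next
    case False
    then have pp: "p > 0" using p0 by simp
    have "(p powr c) ^ m = p powr (real m * c)" using False by (simp add: powr_power)
    also have "\<dots> = (p powr real m) powr c" by (simp add: powr_powr)
    also have "p powr real m = p ^ m" using pp by (simp add: powr_realpow)
    also have "p ^ m = \<epsilon> / real n" using npos by (simp add: \<epsilon>_def)
    finally show ?thesis .
  qed
  also have "\<dots> = \<epsilon> powr c / real n powr c" by (simp add: powr_divide)
  finally have Qm: "Qf n k d ^ m \<le> \<epsilon> powr c / real n powr c" .
  have A: "\<epsilon> powr c \<le> sqrt \<epsilon> ^ k"
  proof (cases "\<epsilon> = 0")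
    case True then show ?thesis by simp
  next
    case False
    have "\<epsilon> powr c \<le> \<epsilon> powr (real k / 2)" using kc E0 E1 by (intro powr_mono') auto
    also have "\<epsilon> powr (real k / 2) = (\<epsilon> powr (1/2)) ^ k" using False by (simp add: powr_power)
    also have "\<epsilon> powr (1/2) = sqrt \<epsilon>" using E0 by (simp add: powr_half_sqrt)
    finally show ?thesis .
  qed
  have B: "real n powr g \<le> real n powr c" using gc npos N K1 by (intro powr_mono) auto
  have Bpos: "real n powr g > 0" using npos by simp
  have "real (n choose k) * Qf n k d ^ m \<le> ((2 * exp 1) ^ k * real n powr g) * (\<epsilon> powr c / real n powr c)"
    using binom_bound[OF k1 kn] Qm Qf_nonneg unfolding g_def by (intro mult_mono) auto
  also have "\<dots> \<le> ((2 * exp 1) ^ k * real n powr g) * (sqrt \<epsilon> ^ k / real n powr g)"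
    using A B Bpos E0 by (intro mult_left_mono frac_le) auto
  also have "\<dots> = (2 * exp 1 * sqrt \<epsilon>) ^ k" using Bpos by (simp add: power_mult_distrib)
  finally show ?thesis by (simp add: \<epsilon>_def p_def)
qed



lemma second_moment:
  fixes M :: "'a pmf" and I :: "'b set" and B :: "'b \<Rightarrow> 'a set"
  assumes fin: "finite (set_pmf M)" and finI: "finite I"
    and mu: "\<mu> = (\<Sum>i\<in>I. measure_pmf.prob M (B i))"
    and sec: "(\<Sum>i\<in>I. \<Sum>j\<in>I. measure_pmf.prob M (B i \<inter> B j)) \<le> \<mu> + \<mu>\<^sup>2"
    and mpos: "\<mu> > 0"
  shows "measure_pmf.prob M {x. \<forall>i\<in>I. x \<notin> B i} \<le> 1 / \<mu>"
proof -
  define X where "X x = (\<Sum>i\<in>I. indicator (B i) x :: real)" for x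
  define Z where "Z = {x. \<forall>i\<in>I. x \<notin> B i}"
  have int: "integrable (measure_pmf M) f" for f :: "'a \<Rightarrow> real"
    using fin by (rule integrable_measure_pmf_finite)
  have EX: "measure_pmf.expectation M X = \<mu>"
    unfolding X_def mu by (simp add: integral_sum int)
  have EX2: "measure_pmf.expectation M (\<lambda>x. (X x)\<^sup>2) = (\<Sum>i\<in>I. \<Sum>j\<in>I. measure_pmf.prob M (B i \<inter> B j))"
  proof -
    have "(\<lambda>x. (X x)\<^sup>2) = (\<lambda>x. \<Sum>i\<in>I. \<Sum>j\<in>I. indicator (B i \<inter> B j) x)"
      by (rule ext) (simp add: X_def power2_eq_square sum_product indicator_inter_arith)
    then show ?thesis
      by (simp add: integral_sum int)
  qed
  have pt: "indicator Z x * \<mu>\<^sup>2 \<le> (X x - \<mu>)\<^sup>2" for x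
  proof (cases "x \<in> Z")
    case True
    then have "X x = 0" by (simp add: X_def Z_def)
    then show ?thesis using True by simp
  next
    case False then show ?thesis by simp
  qed
  have "measure_pmf.prob M Z * \<mu>\<^sup>2 = measure_pmf.expectation M (\<lambda>x. indicator Z x * \<mu>\<^sup>2)"
    by simp
  also have "\<dots> \<le> measure_pmf.expectation M (\<lambda>x. (X x - \<mu>)\<^sup>2)"
    using pt by (intro integral_mono int) auto
  also have "(\<lambda>x. (X x - \<mu>)\<^sup>2) = (\<lambda>x. (X x)\<^sup>2 - 2 * \<mu> * X x + \<mu>\<^sup>2)"
    by (rule ext) (simp add: power2_diff algebra_simps)
  also have "measure_pmf.expectation M \<dots> = measure_pmf.expectation M (\<lambda>x. (X x)\<^sup>2) - 2 * \<mu> * measure_pmf.expectation M X + \<mu>\<^sup>2"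
    by (simp add: int)
  also have "\<dots> \<le> \<mu>" using EX EX2 sec by (simp add: power2_eq_square)
  finally have "measure_pmf.prob M Z * \<mu>\<^sup>2 \<le> \<mu>" .
  then have "measure_pmf.prob M Z \<le> \<mu> / \<mu>\<^sup>2" using mpos by (simp add: field_simps)
  then show ?thesis using mpos by (simp add: Z_def power2_eq_square)
qed



definition Sd :: "nat \<Rightarrow> nat \<Rightarrow> nat set set" where
  "Sd n d = {S. S \<subseteq> {1..n} \<and> card S = d}"

lemma fin_Sd: "finite (Sd n d)"
  unfolding Sd_def by (rule finite_subset[of _ "Pow {1..n}"]) auto

lemma card_Sd: "card (Sd n d) = n choose d"
  unfolding Sd_def using n_subsets[of "{1..n}" d] by simp

lemma Sd_ne: "d \<le> n \<Longrightarrow> Sd n d \<noteq> {}"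
  using card_Sd[of n d] by (metis card.empty zero_less_binomial_iff less_irrefl)

lemma prob_unif:
  assumes "d \<le> n"
  shows "measure_pmf.prob (unif_dsubset n d) E = real (card (Sd n d \<inter> E)) / real (n choose d)"
  unfolding unif_dsubset_def Sd_def[symmetric]
  using assms by (simp add: measure_pmf_of_set fin_Sd Sd_ne card_Sd)

lemma prob_prod:
  "measure_pmf.prob (hyp_model n m d) {V. \<forall>j<m. V j \<in> E} = measure_pmf.prob (unif_dsubset n d) E ^ m"
proof -
  have "{V. \<forall>j<m. V j \<in> E} = Pi {..<m} (\<lambda>_. E)" by (auto simp: Pi_def)
  then show ?thesis unfolding hyp_model_def by (simp add: measure_Pi_pmf_Pi)
qed

lemma finite_hyp: "d \<le> n \<Longrightarrow> finite (set_pmf (hyp_model n m d))"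
proof -
  assume dn: "d \<le> n"
  have "finite (set_pmf (unif_dsubset n d))"
    unfolding unif_dsubset_def Sd_def[symmetric] using fin_Sd Sd_ne dn by simp
  then show ?thesis unfolding hyp_model_def by (simp add: set_Pi_pmf finite_PiE_dflt)
qed

lemma prob_nocross:
  assumes A: "A \<subseteq> {1..n}" and d1: "1 \<le> d" and dn: "d \<le> n"
  shows "measure_pmf.prob (unif_dsubset n d) {S. S \<inter> A = {} \<or> S \<inter> ({1..n} - A) = {}} = Qf n (card A) d"
proof -
  have finA: "finite A" using A finite_subset by blast
  have eq: "Sd n d \<inter> {S. S \<inter> A = {} \<or> S \<inter> ({1..n} - A) = {}} =
      {S. S \<subseteq> {1..n} - A \<and> card S = d} \<union> {S. S \<subseteq> A \<and> card S = d}"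
    unfolding Sd_def using A by auto
  have disj: "{S. S \<subseteq> {1..n} - A \<and> card S = d} \<inter> {S. S \<subseteq> A \<and> card S = d} = {}"
  proof (rule ccontr)
    assume "\<not> ?thesis"
    then obtain S where "S \<subseteq> {1..n} - A" "S \<subseteq> A" "card S = d" by blast
    then have "S = {}" by blast
    then show False using \<open>card S = d\<close> d1 by simp
  qed
  have f1: "finite {S. S \<subseteq> {1..n} - A \<and> card S = d}" by (rule finite_subset[of _ "Pow {1..n}"]) auto
  have f2: "finite {S. S \<subseteq> A \<and> card S = d}" by (rule finite_subset[of _ "Pow {1..n}"]) (use A in auto)
  have c1: "card {S. S \<subseteq> {1..n} - A \<and> card S = d} = (n - card A) choose d"
    using n_subsets[of "{1..n} - A" d] A finA by (simp add: card_Diff_subset)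
  have c2: "card {S. S \<subseteq> A \<and> card S = d} = card A choose d"
    using n_subsets[OF finA] by simp
  show ?thesis
    unfolding prob_unif[OF dn] eq Qf_def
    using card_Un_disjoint[OF f1 f2 disj] c1 c2 by simp
qed

lemma prob_avoid:
  assumes B: "B \<subseteq> {1..n}" and dn: "d \<le> n"
  shows "measure_pmf.prob (unif_dsubset n d) {S. S \<inter> B = {}} = real ((n - card B) choose d) / real (n choose d)"
proof -
  have finB: "finite B" using B finite_subset by blast
  have eq: "Sd n d \<inter> {S. S \<inter> B = {}} = {S. S \<subseteq> {1..n} - B \<and> card S = d}"
    unfolding Sd_def using B by auto
  have c1: "card {S. S \<subseteq> {1..n} - B \<and> card S = d} = (n - card B) choose d"
    using n_subsets[of "{1..n} - B" d] B finB by (simp add: card_Diff_subset)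
  show ?thesis unfolding prob_unif[OF dn] eq c1 ..
qed

lemma ratio1:
  assumes "d \<le> n" "1 \<le> n"
  shows "real ((n - 1) choose d) / real (n choose d) = 1 - real d / real n"
proof -
  have "real (n - d) * real (n choose d) = real n * real ((n - 1) choose d)"
    using arg_cong[OF binomial_absorb_comp[of n d], of real] by (simp only: of_nat_mult)
  moreover have "real (n choose d) > 0" using assms by simp
  ultimately show ?thesis using assms by (simp add: field_simps of_nat_diff)
qed

lemma ratio2:
  assumes "d \<le> n" "2 \<le> n"
  shows "real ((n - 2) choose d) / real (n choose d) \<le> (1 - real d / real n)\<^sup>2"
proof -
  have h: "real (n - 1 - d) * real ((n - 1) choose d) = real (n - 1) * real ((n - 1 - 1) choose d)"
    using arg_cong[OF binomial_absorb_comp[of "n-1" d], of real] by (simp only: of_nat_mult)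
  have n2: "n - 1 - 1 = n - 2" by simp
  have np: "real (n - 1) > 0" using assms by simp
  have r: "real (n - 1 - d) / real (n - 1) \<le> 1 - real d / real n"
  proof (cases "d \<le> n - 1")
    case True
    then have "real (n - 1 - d) / real (n - 1) = 1 - real d / (real n - 1)"
      using assms by (simp add: of_nat_diff field_simps)
    also have "\<dots> \<le> 1 - real d / real n"
      using assms by (intro diff_left_mono divide_left_mono) auto
    finally show ?thesis .
  next
    case False
    then have "n - 1 - d = 0" by simp
    then show ?thesis using assms by simp
  qed
  have c: "real (n choose d) > 0" using assms by simp
  have "real ((n - 2) choose d) = real (n - 1 - d) / real (n - 1) * real ((n - 1) choose d)"
    using h np unfolding n2 by (simp add: field_simps)
  also have "real ((n - 1) choose d) = (1 - real d / real n) * real (n choose d)"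
    using ratio1[of d n] assms c by (simp add: field_simps)
  finally have "real ((n - 2) choose d) / real (n choose d) = real (n - 1 - d) / real (n - 1) * (1 - real d / real n)"
    using c by simp
  also have "\<dots> \<le> (1 - real d / real n) * (1 - real d / real n)"
    using r assms by (intro mult_right_mono) auto
  finally show ?thesis by (simp add: power2_eq_square)
qed



lemma geom_sum:
  fixes x :: real
  assumes "0 \<le> x" "x < 1"
  shows "(\<Sum>k\<in>{1..K}. x ^ k) \<le> x / (1 - x)"
proof -
  have "(\<Sum>k\<in>{1..K}. x ^ k) = x * (1 - x ^ K) / (1 - x)"
  proof (induction K)
    case 0 then show ?case by simp
  next
    case (Suc K)
    have "(\<Sum>k\<in>{1..Suc K}. x ^ k) = (\<Sum>k\<in>{1..K}. x ^ k) + x ^ Suc K"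
      by (simp add: atLeastAtMostSuc_conv)
    also have "\<dots> = x * (1 - x ^ K) / (1 - x) + x ^ Suc K" using Suc by simp
    also have "\<dots> = x * (1 - x ^ Suc K) / (1 - x)" using assms by (simp add: field_simps)
    finally show ?case .
  qed
  also have "\<dots> \<le> x * 1 / (1 - x)"
    using assms by (intro divide_right_mono mult_left_mono) auto
  finally show ?thesis by simp
qed

definition cutfam :: "nat \<Rightarrow> nat set set" where
  "cutfam n = {A. A \<subseteq> {1..n} \<and> 1 \<le> card A \<and> 2 * card A \<le> n}"

definition cutev :: "nat \<Rightarrow> nat \<Rightarrow> nat set \<Rightarrow> (nat \<Rightarrow> nat set) set" where
  "cutev n m A = {V. \<forall>j<m. V j \<in> {S. S \<inter> A = {} \<or> S \<inter> ({1..n} - A) = {}}}"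

lemma fin_cutfam: "finite (cutfam n)"
  unfolding cutfam_def by (rule finite_subset[of _ "Pow {1..n}"]) auto

lemma bad_subset:
  "{V. \<not> hyp_connected {1..n} (V ` {..<m})} \<subseteq> (\<Union>A\<in>cutfam n. cutev n m A)"
proof
  fix V assume "V \<in> {V. \<not> hyp_connected {1..n} (V ` {..<m})}"
  then obtain A where A: "A \<subseteq> {1..n}" "A \<noteq> {}" "{1..n} - A \<noteq> {}"
    and nc: "\<forall>j<m. V j \<inter> A = {} \<or> V j \<inter> ({1..n} - A) = {}"
    unfolding hyp_connected_def by auto
  have finA: "finite A" using A(1) finite_subset by blast
  show "V \<in> (\<Union>A\<in>cutfam n. cutev n m A)"
  proof (cases "2 * card A \<le> n")
    case True
    have "card A \<ge> 1" using A(2) finA by (simp add: Suc_le_eq card_gt_0_iff)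
    then have "A \<in> cutfam n" using True A(1) by (simp add: cutfam_def)
    moreover have "V \<in> cutev n m A" using nc by (simp add: cutev_def)
    ultimately show ?thesis by blast
  next
    case False
    define A' where "A' = {1..n} - A"
    have cA': "card A' = n - card A" unfolding A'_def using A(1) finA by (simp add: card_Diff_subset)
    have "finite A'" unfolding A'_def by simp
    then have "card A' \<ge> 1" using A(3) by (simp add: A'_def Suc_le_eq card_gt_0_iff)
    then have "A' \<in> cutfam n" using False cA' by (simp add: cutfam_def A'_def)
    moreover have "{1..n} - A' = A" unfolding A'_def using A(1) by blast
    then have "V \<in> cutev n m A'" using nc by (auto simp: cutev_def A'_def)
    ultimately show ?thesis by blast
  qed
qed

lemma group_sum:
  "(\<Sum>A\<in>cutfam n. f (card A)) = (\<Sum>k\<in>{1..n div 2}. real (n choose k) * f k)" for f :: "nat \<Rightarrow> real"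
proof -
  have "(\<Sum>A\<in>cutfam n. f (card A)) = (\<Sum>k\<in>{1..n div 2}. \<Sum>A\<in>{A \<in> cutfam n. card A = k}. f (card A))"
    by (rule sum.group[symmetric]) (auto simp: fin_cutfam cutfam_def)
  also have "\<dots> = (\<Sum>k\<in>{1..n div 2}. real (n choose k) * f k)"
  proof (rule sum.cong)
    fix k assume k: "k \<in> {1..n div 2}"
    have "{A \<in> cutfam n. card A = k} = {A. A \<subseteq> {1..n} \<and> card A = k}"
      using k by (auto simp: cutfam_def)
    then have "(\<Sum>A\<in>{A \<in> cutfam n. card A = k}. f (card A)) = (\<Sum>A\<in>{A. A \<subseteq> {1..n} \<and> card A = k}. f k)"
      by simp
    also have "\<dots> = real (n choose k) * f k"
      using n_subsets[of "{1..n}" k] by simp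
    finally show "(\<Sum>A\<in>{A \<in> cutfam n. card A = k}. f (card A)) = real (n choose k) * f k" .
  qed simp
  finally show ?thesis .
qed

lemma disconn_bound:
  assumes n2: "2 \<le> n" and d2: "2 \<le> d" and dn: "d \<le> n"
    and e1: "real n * (1 - real d / real n) ^ m \<le> 1"
    and x1: "2 * exp 1 * sqrt (real n * (1 - real d / real n) ^ m) < 1"
  shows "1 - prob_connected n m d \<le>
     (2 * exp 1 * sqrt (real n * (1 - real d / real n) ^ m)) / (1 - 2 * exp 1 * sqrt (real n * (1 - real d / real n) ^ m))"
proof -
  define x where "x = 2 * exp 1 * sqrt (real n * (1 - real d / real n) ^ m)"
  define M where "M = hyp_model n m d"
  define Good where "Good = {V. hyp_connected {1..n} (V ` {..<m})}"
  have p0: "0 \<le> 1 - real d / real n" using dn n2 by simp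
  have e0: "0 \<le> real n * (1 - real d / real n) ^ m" using p0 by simp
  have x0: "0 \<le> x" using e0 by (simp add: x_def)
  have "prob_connected n m d = measure_pmf.prob M Good" by (simp add: prob_connected_def M_def Good_def)
  also have "Good = UNIV - {V. \<not> hyp_connected {1..n} (V ` {..<m})}" by (auto simp: Good_def)
  also have "measure_pmf.prob M \<dots> = 1 - measure_pmf.prob M {V. \<not> hyp_connected {1..n} (V ` {..<m})}"
    using measure_pmf.prob_compl[of "{V. \<not> hyp_connected {1..n} (V ` {..<m})}" M] by simp
  finally have pc: "1 - prob_connected n m d = measure_pmf.prob M {V. \<not> hyp_connected {1..n} (V ` {..<m})}"
    by simp
  also have "\<dots> \<le> measure_pmf.prob M (\<Union>A\<in>cutfam n. cutev n m A)"
    by (intro measure_pmf.finite_measure_mono bad_subset) auto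
  also have "\<dots> \<le> (\<Sum>A\<in>cutfam n. measure_pmf.prob M (cutev n m A))"
    by (intro measure_pmf.finite_measure_subadditive_finite fin_cutfam) auto
  also have "\<dots> = (\<Sum>A\<in>cutfam n. Qf n (card A) d ^ m)"
  proof (rule sum.cong)
    fix A assume A: "A \<in> cutfam n"
    then have "A \<subseteq> {1..n}" by (simp add: cutfam_def)
    then show "measure_pmf.prob M (cutev n m A) = Qf n (card A) d ^ m"
      unfolding M_def cutev_def prob_prod using prob_nocross[of A n d] d2 dn by simp
  qed simp
  also have "\<dots> = (\<Sum>k\<in>{1..n div 2}. real (n choose k) * Qf n k d ^ m)"
    by (rule group_sum)
  also have "\<dots> \<le> (\<Sum>k\<in>{1..n div 2}. x ^ k)"
  proof (rule sum_mono)
    fix k assume k: "k \<in> {1..n div 2}"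
    then have "1 \<le> k" "2 * k \<le> n" by auto
    then show "real (n choose k) * Qf n k d ^ m \<le> x ^ k"
      unfolding x_def using term_bound[of k n d m] d2 dn e0 e1 by simp
  qed
  also have "\<dots> \<le> x / (1 - x)" using geom_sum x0 x1 by (simp add: x_def)
  finally show ?thesis by (simp add: x_def)
qed



lemma isol_bound:
  assumes n2: "2 \<le> n" and d2: "2 \<le> d" and dn: "d < n"
  shows "prob_connected n m d \<le> 1 / (real n * (1 - real d / real n) ^ m)"
proof -
  define M where "M = hyp_model n m d"
  define p where "p = 1 - real d / real n"
  define B where "B i = {V. \<forall>j<m. V j \<in> {S. S \<inter> {i} = {}}}" for i :: nat
  define \<mu> where "\<mu> = (\<Sum>i\<in>{1..n}. measure_pmf.prob M (B i))"
  have pp: "p > 0" using dn by (simp add: p_def)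
  have pB: "measure_pmf.prob M (B i) = p ^ m" if i: "i \<in> {1..n}" for i
  proof -
    have "measure_pmf.prob M (B i) = (real ((n - 1) choose d) / real (n choose d)) ^ m"
      unfolding M_def B_def prob_prod using prob_avoid[of "{i}" n d] i dn by simp
    also have "\<dots> = p ^ m" using ratio1[of d n] dn n2 by (simp add: p_def)
    finally show ?thesis .
  qed
  have mu: "\<mu> = real n * p ^ m" unfolding \<mu>_def using pB by simp
  have mpos: "\<mu> > 0" using mu pp n2 by simp
  have pBB: "measure_pmf.prob M (B i \<inter> B j) \<le> (if i = j then p ^ m else p ^ m * p ^ m)"
    if i: "i \<in> {1..n}" and j: "j \<in> {1..n}" for i j
  proof (cases "i = j")
    case True then show ?thesis using pB[OF i] by simp
  next
    case False
    have eq: "B i \<inter> B j = {V. \<forall>j'<m. V j' \<in> {S. S \<inter> {i, j} = {}}}" unfolding B_def by auto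
    have "measure_pmf.prob M (B i \<inter> B j) = (real ((n - 2) choose d) / real (n choose d)) ^ m"
      unfolding M_def eq prob_prod using prob_avoid[of "{i,j}" n d] i j dn False by (simp add: numeral_2_eq_2)
    also have "\<dots> \<le> (p\<^sup>2) ^ m"
      using ratio2[of d n] dn n2 by (intro power_mono) (auto simp: p_def)
    also have "\<dots> = p ^ m * p ^ m" by (simp add: power_mult_distrib power2_eq_square)
    finally show ?thesis using False by simp
  qed
  have sec: "(\<Sum>i\<in>{1..n}. \<Sum>j\<in>{1..n}. measure_pmf.prob M (B i \<inter> B j)) \<le> \<mu> + \<mu>\<^sup>2"
  proof -
    have "(\<Sum>i\<in>{1..n}. \<Sum>j\<in>{1..n}. measure_pmf.prob M (B i \<inter> B j))
        \<le> (\<Sum>i\<in>{1..n}. \<Sum>j\<in>{1..n}. (if i = j then p ^ m else 0) + p ^ m * p ^ m)"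
    proof (intro sum_mono)
      fix i j assume "i \<in> {1..n}" "j \<in> {1..n}"
      then show "measure_pmf.prob M (B i \<inter> B j) \<le> (if i = j then p ^ m else 0) + p ^ m * p ^ m"
      proof -
        have nn: "0 \<le> p ^ m * p ^ m" using pp by simp
        have h: "measure_pmf.prob M (B i \<inter> B j) \<le> (if i = j then p ^ m else p ^ m * p ^ m)"
          using pBB[of i j] \<open>i \<in> {1..n}\<close> \<open>j \<in> {1..n}\<close> by blast
        show ?thesis
        proof (cases "i = j")
          case True
          then have "measure_pmf.prob M (B i \<inter> B j) \<le> p ^ m" using h by simp
          then show ?thesis using True nn by (simp add: add_increasing2)
        next
          case False
          then show ?thesis using h by simp
        qed
      qed
    qed
    also have "\<dots> = (\<Sum>i\<in>{1..n}. p ^ m + real n * (p ^ m * p ^ m))"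
      by (simp add: sum.distrib)
    also have "\<dots> = \<mu> + \<mu>\<^sup>2" by (simp add: mu power2_eq_square algebra_simps)
    finally show ?thesis .
  qed
  have sub: "{V. hyp_connected {1..n} (V ` {..<m})} \<subseteq> {V. \<forall>i\<in>{1..n}. V \<notin> B i}"
  proof (safe)
    fix V i assume hc: "hyp_connected {1..n} (V ` {..<m})" and i: "i \<in> {1..n}" and Bi: "V \<in> B i"
    obtain i' where i': "i' \<in> {1..n}" "i' \<noteq> i"
    proof (cases "i = 1")
      case True then show ?thesis using that[of 2] n2 by auto
    next
      case False then show ?thesis using that[of 1] n2 by auto
    qed
    have "{i} \<subseteq> {1..n}" "{i} \<noteq> {}" "{1..n} - {i} \<noteq> {}" using i i' by auto
    then obtain e where "e \<in> V ` {..<m}" "e \<inter> {i} \<noteq> {}"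
      using hc unfolding hyp_connected_def by blast
    then show False using Bi unfolding B_def by auto
  qed
  have "prob_connected n m d \<le> measure_pmf.prob M {V. \<forall>i\<in>{1..n}. V \<notin> B i}"
    unfolding prob_connected_def M_def using sub by (intro measure_pmf.finite_measure_mono) auto
  also have "\<dots> \<le> 1 / \<mu>"
  proof -
    have fh: "finite (set_pmf M)" using finite_hyp[of d n m] dn by (simp add: M_def)
    show ?thesis using second_moment[OF fh _ \<mu>_def sec mpos] by simp
  qed
  finally show ?thesis by (simp add: mu p_def)
qed



lemma thr_cases:
  assumes "2 \<le> n" "2 \<le> d" "d \<le> n" "1 \<le> m"
  shows "(d = n \<and> threshold_quantity n m d = - \<infinity> \<and> real n * (1 - real d / real n) ^ m = 0) \<or>
         (d < n \<and> real n * (1 - real d / real n) ^ m > 0 \<and>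
          threshold_quantity n m d = ereal (ln (real n * (1 - real d / real n) ^ m)))"
proof (cases "d = n")
  case True
  then show ?thesis using assms by (simp add: threshold_quantity_def power_0_left)
next
  case False
  then have dn: "d < n" using assms by simp
  have pp: "1 - real d / real n > 0" using dn by simp
  have np: "real n > 0" using assms by simp
  have "ln (real n * (1 - real d / real n) ^ m) = ln (real n) + real m * ln (1 - real d / real n)"
    using pp np by (simp add: ln_mult ln_realpow)
  then show ?thesis using dn pp np by (simp add: threshold_quantity_def)
qed



theorem mainTheorem6:
  fixes m d :: "nat \<Rightarrow> nat"
  assumes m_pos: "\<And>n. m n \<ge> 1"
    and d_range: "\<And>n. n \<ge> 2 \<Longrightarrow> 2 \<le> d n \<and> d n \<le> n"
  shows "((\<lambda>n. threshold_quantity n (m n) (d n)) \<longlonglongrightarrow> \<infinity>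
            \<longrightarrow> (\<lambda>n. prob_connected n (m n) (d n)) \<longlonglongrightarrow> 0)
       \<and> ((\<lambda>n. threshold_quantity n (m n) (d n)) \<longlonglongrightarrow> - \<infinity>
            \<longrightarrow> (\<lambda>n. prob_connected n (m n) (d n)) \<longlonglongrightarrow> 1)"
proof (intro conjI impI)
  define \<epsilon> where "\<epsilon> n = real n * (1 - real (d n) / real n) ^ (m n)" for n
  have ev2: "eventually (\<lambda>n. 2 \<le> n) sequentially" by (rule eventually_ge_at_top)
  have cases: "(d n = n \<and> threshold_quantity n (m n) (d n) = - \<infinity> \<and> \<epsilon> n = 0) \<or>
         (d n < n \<and> \<epsilon> n > 0 \<and> threshold_quantity n (m n) (d n) = ereal (ln (\<epsilon> n)))"
    if "2 \<le> n" for n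
    using thr_cases[of n "d n" "m n"] d_range[OF that] m_pos[of n] that unfolding \<epsilon>_def by blast
  have pc0: "0 \<le> prob_connected n m' d'" for n m' d' by (simp add: prob_connected_def)
  have pc1: "prob_connected n m' d' \<le> 1" for n m' d' by (simp add: prob_connected_def)
  {
    assume lim: "(\<lambda>n. threshold_quantity n (m n) (d n)) \<longlonglongrightarrow> \<infinity>"
    have big: "eventually (\<lambda>n. d n < n \<and> \<epsilon> n > K) sequentially" if K: "K > 0" for K
    proof -
      have "eventually (\<lambda>n. ereal (ln K) < threshold_quantity n (m n) (d n)) sequentially"
        using lim by (simp add: tendsto_PInfty)
      then show ?thesis using ev2
      proof eventually_elim
        case (elim n)
        from cases[OF elim(2)] elim(1) have "d n < n" "\<epsilon> n > 0" "ln K < ln (\<epsilon> n)" by auto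
        then show ?case using K by simp
      qed
    qed
    have ft: "filterlim \<epsilon> at_top sequentially"
    proof (subst filterlim_at_top_gt[where c=0], safe)
      fix Z :: real assume "Z > 0"
      show "eventually (\<lambda>n. Z \<le> \<epsilon> n) sequentially"
        using big[OF \<open>Z > 0\<close>] by eventually_elim auto
    qed
    have inv0: "(\<lambda>n. inverse (\<epsilon> n)) \<longlonglongrightarrow> 0" by (rule tendsto_inverse_0_at_top[OF ft])
    have ub: "eventually (\<lambda>n. prob_connected n (m n) (d n) \<le> inverse (\<epsilon> n)) sequentially"
      using big[OF zero_less_one] ev2
    proof eventually_elim
      case (elim n)
      then show ?case using isol_bound[of n "d n" "m n"] d_range[OF elim(2)]
        by (simp add: \<epsilon>_def divide_inverse)
    qed
    show "(\<lambda>n. prob_connected n (m n) (d n)) \<longlonglongrightarrow> 0"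
      by (rule tendsto_sandwich[OF _ ub tendsto_const inv0]) (simp add: pc0)
  }
  {
    assume lim: "(\<lambda>n. threshold_quantity n (m n) (d n)) \<longlonglongrightarrow> - \<infinity>"
    have small: "eventually (\<lambda>n. \<epsilon> n < \<delta>) sequentially" if D: "\<delta> > 0" for \<delta>
    proof -
      have "eventually (\<lambda>n. threshold_quantity n (m n) (d n) < ereal (ln \<delta>)) sequentially"
        using lim by (simp add: tendsto_MInfty)
      then show ?thesis using ev2
      proof eventually_elim
        case (elim n)
        from cases[OF elim(2)] show ?case
        proof
          assume "d n = n \<and> threshold_quantity n (m n) (d n) = - \<infinity> \<and> \<epsilon> n = 0"
          then show ?thesis using D by simp
        next
          assume h: "d n < n \<and> \<epsilon> n > 0 \<and> threshold_quantity n (m n) (d n) = ereal (ln (\<epsilon> n))"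
          then have "ln (\<epsilon> n) < ln \<delta>" using elim(1) by simp
          then show ?thesis using h D by simp
        qed
      qed
    qed
    have e0: "0 \<le> \<epsilon> n" if "2 \<le> n" for n
      using d_range[OF that] that unfolding \<epsilon>_def by simp
    have elim0: "\<epsilon> \<longlonglongrightarrow> 0"
    proof (rule order_tendstoI)
      fix a :: real assume "a < 0"
      show "eventually (\<lambda>n. a < \<epsilon> n) sequentially"
        using ev2 by eventually_elim (use e0 \<open>a < 0\<close> in fastforce)
    next
      fix a :: real assume "0 < a"
      then show "eventually (\<lambda>n. \<epsilon> n < a) sequentially" by (rule small)
    qed
    define x where "x n = 2 * exp 1 * sqrt (\<epsilon> n)" for n
    have x0: "x \<longlonglongrightarrow> 0"
      unfolding x_def using tendsto_mult[OF tendsto_const tendsto_real_sqrt[OF elim0], of "2 * exp 1"]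
      by simp
    have y0: "(\<lambda>n. x n / (1 - x n)) \<longlonglongrightarrow> 0"
      using tendsto_divide[OF x0 tendsto_diff[OF tendsto_const x0, of 1]] by simp
    have lb_lim: "(\<lambda>n. 1 - x n / (1 - x n)) \<longlonglongrightarrow> 1"
      using tendsto_diff[OF tendsto_const y0, of 1] by simp
    have xs: "eventually (\<lambda>n. x n < 1) sequentially" using x0 by (rule order_tendstoD) simp
    have lb: "eventually (\<lambda>n. 1 - x n / (1 - x n) \<le> prob_connected n (m n) (d n)) sequentially"
      using ev2 xs small[OF zero_less_one]
    proof eventually_elim
      case (elim n)
      have "1 - prob_connected n (m n) (d n) \<le> x n / (1 - x n)"
        using disconn_bound[of n "d n" "m n"] d_range[OF elim(1)] elim unfolding x_def \<epsilon>_def by simp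
      then show ?case by simp
    qed
    show "(\<lambda>n. prob_connected n (m n) (d n)) \<longlonglongrightarrow> 1"
      by (rule tendsto_sandwich[OF lb _ lb_lim tendsto_const]) (simp add: pc1)
  }
qed

end
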